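(* Let $m,n,r$ be positive integers with $r<\min\{m,n\}$ and let $\mathcal{M}=\{X\in\mathbb{R}^{m\times n} : \operatorname{rank}X\le r\}$. There exists a Zariski-open dense subset $\mathcal{U}$ of $\mathcal{M}$ such that the following holds for every $X^*=[x_1^*\cdots x_n^*]\in\mathcal{U}$ and every choice of permutation matrices $\tilde\Pi_1,\dots,\tilde\Pi_n\in\mathcal{P}_m$: setting $\tilde X=[\tilde\Pi_1x_1^*\cdots\tilde\Pi_nx_n^*]$, we have $\operatorname{rank}\underline{\pi}(\tilde X)\ge r$ for every $\underline{\pi}=(\Pi_1,\dots,\Pi_n)\in\mathcal{P}_m^n$, with equality if and only if $\underline{\pi}(\tilde X)=\Pi X^*$ for some $\Pi\in\mathcal{P}_m$.
   Context: $\mathcal{P}_m$ denotes the set of $m\times m$ permutation matrices and $\mathcal{P}_m^n=\prod_{j\in[n]}\mathcal{P}_m$ ($n$ ordered copies). For $\underline{\pi}=(\Pi_1,\dots,\Pi_n)\in\mathcal{P}_m^n$ and a matrix $Y=[y_1\cdots y_n]$ with columns $y_j$, $\underline{\pi}(Y)=[\Pi_1y_1\cdots\Pi_ny_n]$. $\mathcal{M}$ is the real algebraic variety defined by the vanishing of all $(r+1)\times(r+1)$ minors, equipped with the Zariski topology (closed sets are algebraic subvarieties of $\mathcal{M}$). *)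

theory Defs
  imports "HOL-Analysis.Analysis"
begin

text \<open>Real m x n matrices are modelled as real^'n^'m (rows indexed by 'm, columns by 'n).\<close>

inductive_set poly_fun :: "((real^'n^'m) \<Rightarrow> real) set" where
  const: "(\<lambda>X. c) \<in> poly_fun"
| coord: "(\<lambda>X. X $ i $ j) \<in> poly_fun"
| add: "p \<in> poly_fun \<Longrightarrow> q \<in> poly_fun \<Longrightarrow> (\<lambda>X. p X + q X) \<in> poly_fun"
| mult: "p \<in> poly_fun \<Longrightarrow> q \<in> poly_fun \<Longrightarrow> (\<lambda>X. p X * q X) \<in> poly_fun"

definition lowrank :: "nat \<Rightarrow> (real^'n^'m) set" where
  "lowrank r = {X. rank X \<le> r}"

definition zariski_closed_in :: "(real^'n^'m) set \<Rightarrow> (real^'n^'m) set \<Rightarrow> bool" where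
  "zariski_closed_in M Z \<longleftrightarrow> (\<exists>P \<subseteq> poly_fun. Z = {X \<in> M. \<forall>p\<in>P. p X = 0})"

definition zariski_open_in :: "(real^'n^'m) set \<Rightarrow> (real^'n^'m) set \<Rightarrow> bool" where
  "zariski_open_in M U \<longleftrightarrow> U \<subseteq> M \<and> zariski_closed_in M (M - U)"

definition zariski_dense_in :: "(real^'n^'m) set \<Rightarrow> (real^'n^'m) set \<Rightarrow> bool" where
  "zariski_dense_in M U \<longleftrightarrow> (\<forall>Z. zariski_closed_in M Z \<and> U \<subseteq> Z \<longrightarrow> Z = M)"

definition perm_matrices :: "(real^'m^'m) set" where
  "perm_matrices = {P. \<exists>\<sigma>. \<sigma> permutes (UNIV :: 'm set) \<and>
                        P = (\<chi> i j. if \<sigma> i = j then 1 else 0)}"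

definition apply_perms :: "('n \<Rightarrow> real^'m^'m) \<Rightarrow> real^'n^'m \<Rightarrow> real^'n^'m" where
  "apply_perms \<pi> Y = (\<chi> i j. (\<pi> j *v column j Y) $ i)"

end

theory Submission imports Defs "HOL-Computational_Algebra.Polynomial" begin

lemma poly_fun_sum: "finite S \<Longrightarrow> (\<And>s. s \<in> S \<Longrightarrow> f s \<in> poly_fun) \<Longrightarrow> (\<lambda>X. \<Sum>s\<in>S. f s X) \<in> poly_fun"
proof (induction S rule: finite_induct)
  case empty then show ?case using poly_fun.const[where c=0] by simp
next
  case (insert x F) then show ?case by (simp add: poly_fun.add)
qed

lemma poly_fun_prod: "finite S \<Longrightarrow> (\<And>s. s \<in> S \<Longrightarrow> f s \<in> poly_fun) \<Longrightarrow> (\<lambda>X. \<Prod>s\<in>S. f s X) \<in> poly_fun"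
proof (induction S rule: finite_induct)
  case empty then show ?case using poly_fun.const[where c=1] by simp
next
  case (insert x F) then show ?case by (simp add: poly_fun.mult)
qed

lemma poly_fun_det:
  fixes F :: "real^'n^'m \<Rightarrow> real^'k^'k"
  assumes "\<And>i j. (\<lambda>X. F X $ i $ j) \<in> poly_fun"
  shows "(\<lambda>X. det (F X)) \<in> poly_fun"
  unfolding det_def
  by (intro poly_fun_sum poly_fun.mult poly_fun.const poly_fun_prod assms) (auto intro: finite_subset)

definition curve :: "real^'m^'m \<Rightarrow> real^'n^'m \<Rightarrow> real^'m^'m \<Rightarrow> real^'n^'m \<Rightarrow> real \<Rightarrow> real^'n^'m" where
  "curve A0 B0 A1 B1 t = (A0 + t *\<^sub>R (A1 - A0)) ** (B0 + t *\<^sub>R (B1 - B0))"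

lemma poly_fun_curve:
  assumes "p \<in> poly_fun"
  shows "\<exists>q. \<forall>t. p (curve A0 B0 A1 B1 t) = poly q t"
  using assms
proof induction
  case (const c) then show ?case by (intro exI[of _ "[:c:]"]) simp
next
  case (coord i j)
  show ?case
    by (intro exI[of _ "\<Sum>l\<in>UNIV. [:A0$i$l, A1$i$l - A0$i$l:] * [:B0$l$j, B1$l$j - B0$l$j:]"])
      (simp add: curve_def matrix_matrix_mult_def poly_sum algebra_simps)
next
  case (add p q) then show ?case by (metis poly_add)
next
  case (mult p q) then show ?case by (metis poly_mult)
qed

lemma curve_0: "curve A0 B0 A1 B1 0 = A0 ** B0" by (simp add: curve_def)
lemma curve_1: "curve A0 B0 A1 B1 1 = A1 ** B1" by (simp add: curve_def)

lemma curve_poly_vanish: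
  assumes p: "p \<in> poly_fun" and f: "f \<in> poly_fun"
    and van: "\<And>t. p (curve A0 B0 A1 B1 t) * f (curve A0 B0 A1 B1 t) = 0"
    and nz: "f (curve A0 B0 A1 B1 1) \<noteq> 0"
  shows "p (curve A0 B0 A1 B1 0) = 0"
proof -
  obtain qp where qp: "\<And>t. p (curve A0 B0 A1 B1 t) = poly qp t" using poly_fun_curve[OF p] by blast
  obtain qf where qf: "\<And>t. f (curve A0 B0 A1 B1 t) = poly qf t" using poly_fun_curve[OF f] by blast
  have "qp * qf = 0" using van by (metis poly_all_0_iff_0 poly_mult qp qf)
  moreover have "qf \<noteq> 0" using nz qf by auto
  ultimately have "qp = 0" by simp
  then show ?thesis using qp by simp
qed

lemma curve_poly_prod:
  assumes g: "g \<in> poly_fun" and h: "h \<in> poly_fun"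
    and g0: "g (curve A0 B0 A1 B1 0) \<noteq> 0" and h1: "h (curve A0 B0 A1 B1 1) \<noteq> 0"
  shows "\<exists>t. g (curve A0 B0 A1 B1 t) * h (curve A0 B0 A1 B1 t) \<noteq> 0"
proof -
  obtain qg where qg: "\<And>t. g (curve A0 B0 A1 B1 t) = poly qg t" using poly_fun_curve[OF g] by blast
  obtain qh where qh: "\<And>t. h (curve A0 B0 A1 B1 t) = poly qh t" using poly_fun_curve[OF h] by blast
  have "qg \<noteq> 0" "qh \<noteq> 0" using g0 h1 qg qh by auto
  then have "qg * qh \<noteq> 0" by simp
  then have "\<exists>t. poly (qg * qh) t \<noteq> 0" using poly_all_0_iff_0 by blast
  then show ?thesis using qg qh by simp
qed

definition supp :: "'m set \<Rightarrow> real^'m^'m \<Rightarrow> bool" where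
  "supp S A \<longleftrightarrow> (\<forall>i l. l \<notin> S \<longrightarrow> A$i$l = 0)"

lemma supp_comb: "supp S A0 \<Longrightarrow> supp S A1 \<Longrightarrow> supp S (A0 + t *\<^sub>R (A1 - A0))"
  by (simp add: supp_def)

lemma rank_le_span:
  fixes X :: "real^'n^'m"
  assumes "\<And>c. column c X \<in> span C" "finite C"
  shows "rank X \<le> card C"
proof -
  have "range (\<lambda>x. X *v x) \<subseteq> span C"
  proof
    fix y assume "y \<in> range (\<lambda>x. X *v x)"
    then obtain x where "y = X *v x" by auto
    then have "y = (\<Sum>i\<in>UNIV. x$i *\<^sub>R column i X)"
      by (simp add: matrix_mult_sum scalar_mult_eq_scaleR)
    then show "y \<in> span C" using assms(1) by (auto intro!: span_sum span_scale)
  qed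
  then show ?thesis unfolding rank_dim_range using dim_le_card assms(2) by blast
qed

lemma rank_supp:
  fixes B :: "real^'n^'m"
  assumes "supp S A"
  shows "rank (A ** B) \<le> card S"
proof -
  have "rank A \<le> card ((\<lambda>l. column l A) ` S)"
  proof (rule rank_le_span)
    fix c show "column c A \<in> span ((\<lambda>l. column l A) ` S)"
    proof (cases "c \<in> S")
      case True then show ?thesis by (auto intro: span_base)
    next
      case False then have "column c A = 0" using assms by (simp add: supp_def column_def vec_eq_iff)
      then show ?thesis by (simp add: span_zero)
    qed
  qed auto
  also have "\<dots> \<le> card S" by (rule card_image_le) simp
  finally show ?thesis using rank_mul_le_left[of A B] by linarith
qed

lemma factor_supp:
  fixes X :: "real^'n^'m"
  assumes "rank X \<le> card S"
  shows "\<exists>A B. supp S A \<and> X = A ** B"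
proof -
  let ?V = "range (\<lambda>x. X *v x)"
  obtain Bs where Bs: "Bs \<subseteq> ?V" "independent Bs" "?V \<subseteq> span Bs" "card Bs = dim ?V"
    using basis_exists by blast
  have fin: "finite Bs" using Bs(2) finiteI_independent by blast
  have "card Bs \<le> card S" using Bs(4) assms rank_dim_range by metis
  then obtain \<phi> where phi: "\<phi> ` Bs \<subseteq> S" "inj_on \<phi> Bs" using card_le_inj[OF fin finite] by blast
  define A :: "real^'m^'m" where "A = (\<chi> i l. if l \<in> \<phi> ` Bs then (inv_into Bs \<phi> l)$i else 0)"
  have sA: "supp S A" using phi(1) by (auto simp: supp_def A_def)
  have colA: "A *v axis (\<phi> b) 1 = b" if "b \<in> Bs" for b
    using that phi(2) by (simp add: matrix_vector_mult_basis column_def A_def vec_eq_iff)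
  have "Bs \<subseteq> range (\<lambda>x. A *v x)" using colA by (metis image_eqI rangeI subsetI)
  moreover have "subspace (range (\<lambda>x. A *v x))"
    by (simp add: linear_subspace_image)
  ultimately have "span Bs \<subseteq> range (\<lambda>x. A *v x)" by (rule span_minimal)
  then have "X *v axis j 1 \<in> range (\<lambda>x. A *v x)" for j
    using Bs(3) by (meson rangeI subsetD)
  then have "\<forall>j. \<exists>y. A *v y = X *v axis j 1" by (metis imageE)
  then obtain y where y: "\<And>j. A *v y j = X *v axis j 1" by metis
  define B :: "real^'n^'m" where "B = (\<chi> l j. y j $ l)"
  have "A ** B = X"
  proof -
    have "(A ** B) $ i $ j = X $ i $ j" for i j
    proof -
      have "(A ** B) $ i $ j = (A *v y j) $ i"
        by (simp add: matrix_matrix_mult_def matrix_vector_mult_def B_def)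
      also have "\<dots> = X $ i $ j" by (simp add: y matrix_vector_mult_basis column_def)
      finally show ?thesis .
    qed
    then show ?thesis by (simp add: vec_eq_iff)
  qed
  then show ?thesis using sA by metis
qed

definition Zmat :: "'m set \<Rightarrow> ('m \<Rightarrow> 'n) \<Rightarrow> real^'n^'m \<Rightarrow> real^'m^'m" where
  "Zmat W h Y = (\<chi> i l. if l \<in> W then Y$i$(h l) else (if i = l then 1 else 0))"

lemma Zmat_rank:
  fixes Y :: "real^'n^'m"
  assumes "det (Zmat W h Y) \<noteq> 0"
  shows "card W \<le> rank Y"
proof -
  define E :: "real^'m^'n" where "E = (\<chi> c l. if l \<in> W \<and> h l = c then 1 else 0)"
  let ?Vw = "{x::real^'m. \<forall>i. i \<notin> W \<longrightarrow> x$i = 0}"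
  have inv: "invertible (Zmat W h Y)" using assms invertible_det_nz by blast
  have inj: "inj (\<lambda>x. Zmat W h Y *v x)"
    using inv by (meson inj_matrix_vector_mult)
  have eq: "Zmat W h Y *v x = (Y ** E) *v x" if "x \<in> ?Vw" for x
  proof -
    have "(Zmat W h Y *v x) $ i = ((Y ** E) *v x) $ i" for i
    proof -
      have inner: "(\<Sum>c\<in>UNIV. Y$i$c * (if l \<in> W \<and> h l = c then 1 else 0)) = (if l\<in>W then Y$i$(h l) else 0)" for l
        by (cases "l \<in> W") (simp_all add: eq_commute[of "h l"] mult.commute[of "Y$i$_"] if_distrib[of "\<lambda>x. x * _"] cong: if_cong)
      have "(Zmat W h Y *v x) $ i = (\<Sum>l\<in>UNIV. (if l \<in> W then Y$i$(h l) else 0) * x $ l)"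
        using that by (auto simp: matrix_vector_mult_def Zmat_def intro!: sum.cong)
      also have "\<dots> = (\<Sum>l\<in>UNIV. (\<Sum>c\<in>UNIV. Y$i$c * (if l \<in> W \<and> h l = c then 1 else 0)) * x $ l)"
        by (rule sum.cong[OF refl]) (simp only: inner)
      also have "\<dots> = ((Y ** E) *v x) $ i"
        by (simp add: matrix_vector_mult_def matrix_matrix_mult_def E_def)
      finally show ?thesis .
    qed
    then show ?thesis by (simp add: vec_eq_iff)
  qed
  have "vec.dim ?Vw = card W" by (rule dim_substandard_cart)
  then have "card W = dim ?Vw" by (simp add: dim_vec_eq)
  also have "\<dots> = dim ((\<lambda>x. Zmat W h Y *v x) ` ?Vw)"
    by (rule dim_image_eq[symmetric]) (auto intro: inj_on_subset[OF inj])
  also have "(\<lambda>x. Zmat W h Y *v x) ` ?Vw = (\<lambda>x. (Y ** E) *v x) ` ?Vw" using eq by auto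
  also have "dim \<dots> \<le> dim (range (\<lambda>x. Y *v x))"
    by (rule dim_subset) (auto simp: matrix_vector_mul_assoc[symmetric])
  finally show ?thesis by (simp add: rank_dim_range)
qed

definition pmat :: "('m \<Rightarrow> 'm) \<Rightarrow> real^'m^'m" where
  "pmat \<sigma> = (\<chi> i j. if \<sigma> i = j then 1 else 0)"

lemma perm_matrices_pmat: "perm_matrices = pmat ` {\<sigma>. \<sigma> permutes UNIV}"
  by (auto simp: perm_matrices_def pmat_def)

lemma pmat_vec: "pmat \<sigma> *v x = (\<chi> i. x $ \<sigma> i)"
proof -
  have "(\<Sum>j\<in>UNIV. (if \<sigma> i = j then 1 else 0) * x $ j) = x $ \<sigma> i" for i
    by (simp add: if_distrib[of "\<lambda>y. y * _"] cong: if_cong)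
  then show ?thesis by (simp add: pmat_def matrix_vector_mult_def vec_eq_iff)
qed

lemma pmat_mult: "pmat \<sigma> ** pmat \<tau> = pmat (\<tau> \<circ> \<sigma>)"
proof -
  have "(\<Sum>k\<in>UNIV. (if \<sigma> i = k then 1 else 0) * (if \<tau> k = j then 1 else 0)) = (if \<tau> (\<sigma> i) = j then 1 else (0::real))" for i j
    by (simp add: if_distrib[of "\<lambda>y. y * _"] cong: if_cong)
  then show ?thesis by (simp add: pmat_def matrix_matrix_mult_def vec_eq_iff)
qed

lemma perm_mult_closed: "P \<in> perm_matrices \<Longrightarrow> Q \<in> perm_matrices \<Longrightarrow> P ** Q \<in> perm_matrices"
  unfolding perm_matrices_pmat by (auto simp: pmat_mult intro: permutes_compose)

lemma pmat_id: "pmat id = mat 1"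
  by (simp add: pmat_def mat_def vec_eq_iff)

lemma perm_left_inv: "P \<in> perm_matrices \<Longrightarrow> \<exists>P'. P' ** P = mat 1"
proof -
  assume "P \<in> perm_matrices"
  then obtain \<sigma> where s: "\<sigma> permutes UNIV" "P = pmat \<sigma>" unfolding perm_matrices_pmat by auto
  have "pmat (inv \<sigma>) ** P = pmat (\<sigma> \<circ> inv \<sigma>)" by (simp add: s pmat_mult)
  also have "\<sigma> \<circ> inv \<sigma> = id" using s(1) by (simp add: permutes_inverses(1) fun_eq_iff)
  finally show ?thesis using pmat_id by metis
qed

lemma rank_perm_mult:
  fixes X :: "real^'n^'m"
  assumes "P \<in> perm_matrices"
  shows "rank (P ** X) = rank X"
proof -
  obtain P' where "P' ** P = mat 1" using perm_left_inv[OF assms] by blast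
  then have "X = P' ** (P ** X)" by (simp add: matrix_mul_assoc)
  then have "rank X \<le> rank (P ** X)" by (metis rank_mul_le_right)
  then show ?thesis using rank_mul_le_right[of P X] by linarith
qed

lemma apply_perms_column: "column j (apply_perms \<pi> Y) = \<pi> j *v column j Y"
  by (simp add: apply_perms_def column_def vec_eq_iff)

lemma apply_perms_comp: "apply_perms \<pi> (apply_perms R X) = apply_perms (\<lambda>j. \<pi> j ** R j) X"
  unfolding apply_perms_def[of \<pi> "apply_perms R X"] apply_perms_column
  by (simp add: apply_perms_def matrix_vector_mul_assoc)

lemma apply_perms_const: "apply_perms (\<lambda>j. P) X = P ** X"
  by (simp add: apply_perms_def matrix_matrix_mult_def matrix_vector_mult_def column_def vec_eq_iff)

lemma finite_perm_matrices: "finite (perm_matrices :: (real^'m^'m) set)"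
  unfolding perm_matrices_pmat by (simp add: finite_permutations)

lemma finite_tuples: "finite {Q :: 'n::finite \<Rightarrow> real^'m^'m. \<forall>j. Q j \<in> perm_matrices}"
proof -
  have "{Q :: 'n \<Rightarrow> real^'m^'m. \<forall>j. Q j \<in> perm_matrices} = PiE UNIV (\<lambda>_. perm_matrices)"
    by (auto simp: PiE_UNIV_domain)
  moreover have "finite (PiE (UNIV::'n set) (\<lambda>_. perm_matrices :: (real^'m^'m) set))"
    by (intro finite_PiE) (auto simp: finite_perm_matrices)
  ultimately show ?thesis by simp
qed

lemma poly_fun_apply_perms: "(\<lambda>X. apply_perms Q X $ i $ c) \<in> poly_fun"
proof -
  have "(\<lambda>X. apply_perms Q X $ i $ c) = (\<lambda>X. \<Sum>l\<in>UNIV. Q c $ i $ l * X $ l $ c)"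
    by (simp add: apply_perms_def matrix_vector_mult_def column_def)
  also have "\<dots> \<in> poly_fun" by (intro poly_fun_sum poly_fun.mult poly_fun.const poly_fun.coord) auto
  finally show ?thesis .
qed

lemma poly_fun_Zmat:
  assumes "\<And>i j. (\<lambda>X. F X $ i $ j) \<in> poly_fun"
  shows "(\<lambda>X. det (Zmat W h (F X))) \<in> poly_fun"
proof (rule poly_fun_det)
  fix i l show "(\<lambda>X. Zmat W h (F X) $ i $ l) \<in> poly_fun"
    by (cases "l \<in> W") (simp_all add: Zmat_def assms poly_fun.const)
qed

lemma det_mat1: "det (mat 1 :: real^'m^'m) = 1" by (rule det_I)

lemma point_rank_r:
  fixes S :: "'m::finite set"
  assumes "card S < CARD('n::finite)"
  shows "\<exists>h0 :: 'm \<Rightarrow> 'n. \<exists>A B. supp S A \<and> det (Zmat S h0 (A ** B)) \<noteq> 0"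
proof -
  obtain h0 :: "'m \<Rightarrow> 'n" where h0: "inj_on h0 S"
    using card_le_inj[of S "UNIV::'n set"] assms by fastforce
  define X0 :: "real^'n^'m" where "X0 = (\<chi> i c. if i \<in> S \<and> c = h0 i then 1 else 0)"
  have "Zmat S h0 X0 = mat 1"
    using h0 by (auto simp: Zmat_def X0_def mat_def vec_eq_iff inj_on_def)
  then have dz: "det (Zmat S h0 X0) \<noteq> 0" by simp
  have "rank X0 \<le> card ((\<lambda>i. axis i (1::real)) ` S)"
  proof (rule rank_le_span)
    fix c
    show "column c X0 \<in> span ((\<lambda>i. axis i (1::real)) ` S)"
    proof (cases "\<exists>i\<in>S. c = h0 i")
      case True
      then obtain i where i: "i \<in> S" "c = h0 i" by blast
      have "column c X0 = axis i 1"
        using i h0 by (auto simp: column_def X0_def axis_def vec_eq_iff inj_on_def)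
      then show ?thesis using i by (auto intro: span_base)
    next
      case False
      then have "column c X0 = 0" by (auto simp: column_def X0_def vec_eq_iff)
      then show ?thesis by (simp add: span_zero)
    qed
  qed simp
  also have "\<dots> \<le> card S" by (rule card_image_le) simp
  finally obtain A B where "supp S A" "X0 = A ** B" using factor_supp by blast
  then show ?thesis using dz by blast
qed

lemma point_bad:
  fixes S :: "'m::finite set" and Q :: "'n::finite \<Rightarrow> real^'m^'m"
  assumes cS: "card S = r" and r0: "0 < r" and rm: "r < CARD('m)" and rn: "r < CARD('n)"
    and Qp: "\<forall>j. Q j \<in> perm_matrices" and jk: "Q j \<noteq> Q k"
  shows "\<exists>W h. card W = r + 1 \<and> (\<exists>A B. supp S A \<and> det (Zmat W h (apply_perms Q (A ** B))) \<noteq> 0)"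
proof -
  have "\<forall>c. \<exists>\<sigma>. \<sigma> permutes UNIV \<and> Q c = pmat \<sigma>" using Qp unfolding perm_matrices_pmat by blast
  then obtain \<sigma> where \<sigma>: "\<And>c. \<sigma> c permutes UNIV" "\<And>c. Q c = pmat (\<sigma> c)" by metis
  have jk': "j \<noteq> k" using jk by blast
  have "\<sigma> j \<noteq> \<sigma> k" using jk \<sigma>(2) by metis
  then obtain u where u: "\<sigma> j u \<noteq> \<sigma> k u" by blast
  define s where "s = \<sigma> j u"
  define u2 where "u2 = inv (\<sigma> k) s"
  have sk: "\<sigma> k u2 = s" unfolding u2_def using \<sigma>(1)[of k] by (simp add: permutes_inverses(1))
  have uu2: "u \<noteq> u2" using sk u s_def by auto
  have injs: "\<And>c x y. \<sigma> c x = \<sigma> c y \<longleftrightarrow> x = y" using \<sigma>(1) by (meson permutes_inj injD)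
  have "r - 1 \<le> card (UNIV - {u, u2} :: 'm set)" using rm uu2 by (simp add: card_Diff_subset)
  then obtain W' where W': "W' \<subseteq> UNIV - {u, u2}" "card W' = r - 1" "finite W'"
    by (rule obtain_subset_with_card_n)
  have "r - 1 \<le> card (UNIV - {j, k} :: 'n set)" using rn jk' by (simp add: card_Diff_subset)
  then obtain T where T: "T \<subseteq> UNIV - {j, k}" "card T = r - 1" "finite T"
    by (rule obtain_subset_with_card_n)
  obtain h' where h': "h' ` W' \<subseteq> T" "inj_on h' W'" using card_le_inj[of W' T] W' T by auto
  define W where "W = insert u (insert u2 W')"
  have "u \<notin> W'" "u2 \<notin> W'" using W'(1) by auto
  then have "card W = Suc (Suc (card W'))" using W'(3) uu2 by (simp add: W_def)
  then have cW: "card W = r + 1" using W'(2) r0 by simp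
  define h where "h = (\<lambda>l. if l = u then j else if l = u2 then k else h' l)"
  define col :: "'n \<Rightarrow> real^'m" where
    "col = (\<lambda>c. if c = j \<or> c = k then axis s 1 else if c \<in> h' ` W' then axis (\<sigma> c (inv_into W' h' c)) 1 else 0)"
  define X0 :: "real^'n^'m" where "X0 = (\<chi> i c. col c $ i)"
  have colX0: "column c X0 = col c" for c by (simp add: X0_def column_def vec_eq_iff)
  have Y: "apply_perms Q X0 $ i $ c = col c $ \<sigma> c i" for i c
    by (simp add: apply_perms_def colX0 \<sigma>(2) pmat_vec)
  have Z: "Zmat W h (apply_perms Q X0) = mat 1"
  proof -
    have "Zmat W h (apply_perms Q X0) $ i $ l = mat 1 $ i $ l" for i l
    proof (cases "l \<in> W")
      case False then show ?thesis by (simp add: Zmat_def mat_def)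
    next
      case True
      then consider "l = u" | "l = u2" "l \<noteq> u" | "l \<in> W'" "l \<noteq> u" "l \<noteq> u2" unfolding W_def by blast
      then show ?thesis
      proof cases
        case 1 then show ?thesis using True
          by (simp add: Zmat_def mat_def Y h_def col_def axis_def s_def injs)
      next
        case 2
        have "(\<sigma> k i = s) = (i = u2)" using sk injs by metis
        then show ?thesis using True 2
          by (simp add: Zmat_def mat_def Y h_def col_def axis_def)
      next
        case 3
        have "h' l \<in> T" using h' 3 by auto
        then have "h' l \<noteq> j" "h' l \<noteq> k" using T by auto
        moreover have "inv_into W' h' (h' l) = l" using h' 3 by simp
        ultimately show ?thesis using True 3
          by (simp add: Zmat_def mat_def Y h_def col_def axis_def injs)
      qed
    qed
    then show ?thesis by (simp add: vec_eq_iff)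
  qed
  define C where "C = insert (axis s (1::real)) ((\<lambda>w. axis (\<sigma> (h' w) w) 1) ` W')"
  have "rank X0 \<le> card C"
  proof (rule rank_le_span)
    fix c
    have "col c \<in> C \<or> col c = 0"
    proof (cases "c = j \<or> c = k")
      case True then show ?thesis by (simp add: col_def C_def)
    next
      case False
      show ?thesis
      proof (cases "c \<in> h' ` W'")
        case True
        then obtain w where w: "w \<in> W'" "c = h' w" by blast
        then have "inv_into W' h' c = w" using h' by simp
        then show ?thesis using False True w by (auto simp: col_def C_def)
      qed (use False in \<open>simp add: col_def\<close>)
    qed
    then show "column c X0 \<in> span C" by (auto simp: colX0 intro: span_base span_zero)
  qed (simp add: C_def W')
  also have "card C \<le> Suc (card ((\<lambda>w. axis (\<sigma> (h' w) w) (1::real)) ` W'))"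
    unfolding C_def using W'(3) by (simp add: card_insert_if)
  also have "\<dots> \<le> Suc (card W')" using card_image_le[OF W'(3)] by simp
  also have "\<dots> = card S" using W' cS r0 by simp
  finally obtain A B where "supp S A" "X0 = A ** B" using factor_supp by blast
  moreover have "det (Zmat W h (apply_perms Q X0)) \<noteq> 0" using Z by simp
  ultimately show ?thesis using cW by blast
qed

definition nzS :: "'m set \<Rightarrow> (real^'n^'m \<Rightarrow> real) \<Rightarrow> bool" where
  "nzS S g \<longleftrightarrow> (\<exists>A B. supp S A \<and> g (A ** B) \<noteq> 0)"

lemma nz_mult:
  assumes "g \<in> poly_fun" "h \<in> poly_fun" "nzS S g" "nzS S h"
  shows "nzS S (\<lambda>X. g X * h X)"
proof -
  obtain A1 B1 where 1: "supp S A1" "g (A1 ** B1) \<noteq> 0" using assms(3) nzS_def by blast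
  obtain A2 B2 where 2: "supp S A2" "h (A2 ** B2) \<noteq> 0" using assms(4) nzS_def by blast
  obtain t where "g (curve A1 B1 A2 B2 t) * h (curve A1 B1 A2 B2 t) \<noteq> 0"
    using curve_poly_prod[OF assms(1,2)] 1 2 by (metis curve_0 curve_1)
  moreover have "supp S (A1 + t *\<^sub>R (A2 - A1))" using 1 2 supp_comb by blast
  ultimately show ?thesis unfolding nzS_def curve_def by blast
qed

lemma nz_prod:
  assumes "finite F" "\<And>Q. Q \<in> F \<Longrightarrow> g Q \<in> poly_fun \<and> nzS S (g Q)"
  shows "nzS S (\<lambda>X. \<Prod>Q\<in>F. g Q X)"
  using assms
proof (induction F rule: finite_induct)
  case empty
  have "supp S 0" by (simp add: supp_def)
  then show ?case by (auto simp: nzS_def)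
next
  case (insert x F)
  have "nzS S (\<lambda>X. g x X * (\<Prod>Q\<in>F. g Q X))"
    using insert by (intro nz_mult poly_fun_prod) auto
  then show ?case using insert by simp
qed

theorem theorem1:
  fixes r :: nat
  assumes "0 < r" and "r < CARD('m::finite)" and "r < CARD('n::finite)"
  shows "\<exists>U :: (real^'n^'m) set.
           zariski_open_in (lowrank r) U \<and> zariski_dense_in (lowrank r) U \<and>
           (\<forall>Xs\<in>U. \<forall>\<Pi>t :: 'n \<Rightarrow> real^'m^'m. (\<forall>j. \<Pi>t j \<in> perm_matrices) \<longrightarrow>
              (\<forall>\<pi> :: 'n \<Rightarrow> real^'m^'m. (\<forall>j. \<pi> j \<in> perm_matrices) \<longrightarrow>
                 r \<le> rank (apply_perms \<pi> (apply_perms \<Pi>t Xs)) \<and>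
                 (rank (apply_perms \<pi> (apply_perms \<Pi>t Xs)) = r \<longleftrightarrow>
                    (\<exists>P\<in>perm_matrices. apply_perms \<pi> (apply_perms \<Pi>t Xs) = P ** Xs))))"
proof -
  obtain S :: "'m set" where S: "card S = r"
    using obtain_subset_with_card_n[of r "UNIV :: 'm set"] assms(2) by auto
  obtain h0 :: "'m \<Rightarrow> 'n" where h0: "nzS S (\<lambda>X. det (Zmat S h0 X))"
    using point_rank_r[of S, where 'n='n] S assms(3) unfolding nzS_def by blast
  define Bad where "Bad = {Q :: 'n \<Rightarrow> real^'m^'m. (\<forall>j. Q j \<in> perm_matrices) \<and> (\<exists>j k. Q j \<noteq> Q k)}"
  have finBad: "finite Bad" unfolding Bad_def by (rule finite_subset[OF _ finite_tuples]) auto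
  have "\<forall>Q\<in>Bad. \<exists>Wh. card (fst Wh) = r + 1 \<and> nzS S (\<lambda>X. det (Zmat (fst Wh) (snd Wh) (apply_perms Q X)))"
  proof
    fix Q assume "Q \<in> Bad"
    then obtain j k where "\<forall>j. Q j \<in> perm_matrices" "Q j \<noteq> Q k" unfolding Bad_def by blast
    then obtain W h where "card W = r + 1" "\<exists>A B. supp S A \<and> det (Zmat W h (apply_perms Q (A ** B))) \<noteq> 0"
      using point_bad[OF S assms] by blast
    then show "\<exists>Wh. card (fst Wh) = r + 1 \<and> nzS S (\<lambda>X. det (Zmat (fst Wh) (snd Wh) (apply_perms Q X)))"
      unfolding nzS_def by (intro exI[of _ "(W, h)"]) auto
  qed
  then obtain Wh where Wh: "\<And>Q. Q \<in> Bad \<Longrightarrow> card (fst (Wh Q)) = r + 1 \<and>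
      nzS S (\<lambda>X. det (Zmat (fst (Wh Q)) (snd (Wh Q)) (apply_perms Q X)))" by metis
  define pQ where "pQ = (\<lambda>Q X. det (Zmat (fst (Wh Q)) (snd (Wh Q)) (apply_perms Q X)))"
  define p0 where "p0 = (\<lambda>X. det (Zmat S h0 X))"
  define f where "f = (\<lambda>X. p0 X * (\<Prod>Q\<in>Bad. pQ Q X))"
  have p0p: "p0 \<in> poly_fun" unfolding p0_def by (rule poly_fun_Zmat) (rule poly_fun.coord)
  have pQp: "pQ Q \<in> poly_fun" for Q unfolding pQ_def by (rule poly_fun_Zmat) (rule poly_fun_apply_perms)
  have fp: "f \<in> poly_fun" unfolding f_def using p0p pQp finBad
    by (intro poly_fun.mult poly_fun_prod) auto
  have "nzS S (\<lambda>X. \<Prod>Q\<in>Bad. pQ Q X)"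
    using finBad pQp Wh by (intro nz_prod) (auto simp: pQ_def)
  then have fnz: "nzS S f" unfolding f_def using h0 p0p pQp finBad
    by (intro nz_mult poly_fun_prod) (auto simp: p0_def)
  have inM: "A ** B \<in> lowrank r" if "supp S A" for A B :: "real^_^_"
    using rank_supp[OF that, of B] S by (simp add: lowrank_def)
  define U where "U = {X \<in> lowrank r. f X \<noteq> 0}"
  have opn: "zariski_open_in (lowrank r) U"
    unfolding zariski_open_in_def zariski_closed_in_def
    by (intro conjI exI[of _ "{f}"]) (auto simp: U_def fp)
  have dense: "zariski_dense_in (lowrank r) U"
    unfolding zariski_dense_in_def
  proof (intro allI impI)
    fix Z assume Z: "zariski_closed_in (lowrank r) Z \<and> U \<subseteq> Z"
    then obtain P where P: "P \<subseteq> poly_fun" "Z = {X \<in> lowrank r. \<forall>p\<in>P. p X = 0}"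
      unfolding zariski_closed_in_def by blast
    obtain A1 B1 where AB1: "supp S A1" "f (A1 ** B1) \<noteq> 0" using fnz nzS_def by blast
    have "X \<in> Z" if X: "X \<in> lowrank r" for X
    proof -
      obtain A0 B0 where AB0: "supp S A0" "X = A0 ** B0"
        using factor_supp[of X S] X S by (auto simp: lowrank_def)
      have "p X = 0" if p: "p \<in> P" for p
      proof -
        have "p (curve A0 B0 A1 B1 0) = 0"
        proof (rule curve_poly_vanish[OF _ fp])
          show "p \<in> poly_fun" using p P by blast
          show "f (curve A0 B0 A1 B1 1) \<noteq> 0" using AB1 by (simp add: curve_1)
          fix t
          have "curve A0 B0 A1 B1 t \<in> lowrank r"
            unfolding curve_def by (rule inM, rule supp_comb[OF AB0(1) AB1(1)])
          then show "p (curve A0 B0 A1 B1 t) * f (curve A0 B0 A1 B1 t) = 0"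
            using Z p P(2) by (cases "f (curve A0 B0 A1 B1 t) = 0") (auto simp: U_def)
        qed
        then show ?thesis using AB0 by (simp add: curve_0)
      qed
      then show ?thesis using X P(2) by blast
    qed
    then show "Z = lowrank r" using P(2) by blast
  qed
  have main: "r \<le> rank (apply_perms pp (apply_perms Rt Xs)) \<and>
                 (rank (apply_perms pp (apply_perms Rt Xs)) = r \<longleftrightarrow>
                    (\<exists>P\<in>perm_matrices. apply_perms pp (apply_perms Rt Xs) = P ** Xs))"
    if Xs: "Xs \<in> U" and Pt: "\<forall>j. Rt j \<in> perm_matrices" and pi: "\<forall>j. pp j \<in> perm_matrices"
    for Xs and Rt pp :: "'n \<Rightarrow> real^'m^'m"
  proof -
    define Q where "Q = (\<lambda>j. pp j ** Rt j)"
    have Qp: "\<forall>j. Q j \<in> perm_matrices" using Pt pi perm_mult_closed unfolding Q_def by blast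
    have Yeq: "apply_perms pp (apply_perms Rt Xs) = apply_perms Q Xs"
      by (simp add: apply_perms_comp Q_def)
    have rX: "rank Xs \<le> r" using Xs by (simp add: U_def lowrank_def)
    have fX: "f Xs \<noteq> 0" using Xs by (simp add: U_def)
    then have p0X: "p0 Xs \<noteq> 0" and pQX: "\<And>Q. Q \<in> Bad \<Longrightarrow> pQ Q Xs \<noteq> 0"
      using finBad by (auto simp: f_def)
    have rX2: "r \<le> rank Xs" using Zmat_rank[of S h0 Xs] p0X S by (simp add: p0_def)
    show ?thesis
    proof (cases "Q \<in> Bad")
      case True
      have "r + 1 \<le> rank (apply_perms Q Xs)"
        using Zmat_rank pQX[OF True] Wh[OF True] unfolding pQ_def by metis
      moreover have "rank (P ** Xs) \<le> r" for P using rank_mul_le_right[of P Xs] rX by linarith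
      ultimately show ?thesis unfolding Yeq by (metis Suc_eq_plus1 not_less_eq_eq le_SucI nat_less_le)
    next
      case False
      define j0 :: 'n where "j0 = undefined"
      have "Q j = Q j0" for j using False Qp unfolding Bad_def by blast
      then have "Q = (\<lambda>j. Q j0)" by blast
      then have Y2: "apply_perms Q Xs = Q j0 ** Xs" by (metis apply_perms_const)
      have "rank (Q j0 ** Xs) = rank Xs" using rank_perm_mult Qp by blast
      then show ?thesis unfolding Yeq Y2 using rX rX2 Qp by auto
    qed
  qed
  show ?thesis using opn dense main by blast
qed

end
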